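(* Let $r\ge2$ be an even integer, let $Q_0<Q_1<\dots<Q_n<Q_{n+1}$ and $P_1,\dots,P_n\in\mathbb R$. Then there is a unique $(\hat u_0,\dots,\hat u_{n+1})\in\mathbb R^{n+2}$ with $\hat u_0=\hat u_{n+1}=0$ satisfying, for $i=1,\dots,n$, $$P_i=-\left|\frac{\hat u_{i+1}-\hat u_i}{Q_{i+1}-Q_i}\right|^{r-2}\frac{\hat u_{i+1}-\hat u_i}{Q_{i+1}-Q_i}+\left|\frac{\hat u_i-\hat u_{i-1}}{Q_i-Q_{i-1}}\right|^{r-2}\frac{\hat u_i-\hat u_{i-1}}{Q_i-Q_{i-1}}.$$ *)

theory Defs
  imports Complex_Main
begin

definition rphi :: "nat \<Rightarrow> real \<Rightarrow> real" where
  "rphi r x = \<bar>x\<bar> ^ (r - 2) * x"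

definition disc_sol :: "nat \<Rightarrow> nat \<Rightarrow> (nat \<Rightarrow> real) \<Rightarrow> (nat \<Rightarrow> real) \<Rightarrow> (nat \<Rightarrow> real) \<Rightarrow> bool" where
  "disc_sol r n Q P u \<longleftrightarrow> u 0 = 0 \<and> u (n + 1) = 0 \<and>
     (\<forall>i\<in>{1..n}. P i = - rphi r ((u (i + 1) - u i) / (Q (i + 1) - Q i))
                        + rphi r ((u i - u (i - 1)) / (Q i - Q (i - 1))))"

end

theory Submission
  imports Defs
begin

lemma rphi_sgn: "r \<ge> 2 \<Longrightarrow> rphi r x = sgn x * \<bar>x\<bar> ^ (r - 1)"
proof -
  assume "r \<ge> 2"
  then have "r - 1 = Suc (r - 2)" by simp
  then have "sgn x * \<bar>x\<bar> ^ (r - 1) = (sgn x * \<bar>x\<bar>) * \<bar>x\<bar> ^ (r - 2)"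
    by (simp only: power_Suc mult.assoc)
  also have "\<dots> = \<bar>x\<bar> ^ (r - 2) * x" by (simp add: sgn_mult_abs)
  finally show ?thesis unfolding rphi_def by simp
qed

lemma rphi_less: "r \<ge> 2 \<Longrightarrow> rphi r x < rphi r y \<Longrightarrow> x < y"
proof -
  assume r: "r \<ge> 2" and l: "rphi r x < rphi r y"
  have "root (r - 1) (rphi r x) < root (r - 1) (rphi r y)" using l r by simp
  moreover have "root (r - 1) (rphi r z) = z" for z
    using r by (simp add: rphi_sgn root_sgn_power)
  ultimately show "x < y" by simp
qed

lemma rphi_inj: "r \<ge> 2 \<Longrightarrow> rphi r x = rphi r y \<Longrightarrow> x = y"
proof -
  assume r: "r \<ge> 2" and l: "rphi r x = rphi r y"
  have "root (r - 1) (rphi r z) = z" for z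
    using r by (simp add: rphi_sgn root_sgn_power)
  then show "x = y" using l by metis
qed

lemma rphi_root: "r \<ge> 2 \<Longrightarrow> rphi r (root (r - 1) y) = y"
  by (simp add: rphi_sgn sgn_power_root)

lemma rphi_root': "r \<ge> 2 \<Longrightarrow> rphi r (root (r - Suc 0) y) = y"
  using rphi_root by simp

theorem mainTheorem8:
  fixes r n :: nat and Q P :: "nat \<Rightarrow> real"
  assumes "even r" and "r \<ge> 2"
    and "\<And>i. i \<le> n \<Longrightarrow> Q i < Q (i + 1)"
  shows "\<exists>u. disc_sol r n Q P u \<and>
           (\<forall>v. disc_sol r n Q P v \<longrightarrow> (\<forall>i\<le>n + 1. v i = u i))"
proof -
  note r = assms(2)
  note Qm = assms(3)
  define S where "S j = (\<Sum>k\<in>{1..j}. P k)" for j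
  define F where "F c = (\<Sum>j<n+1. (Q (j+1) - Q j) * root (r - 1) (c - S j))" for c
  define B where "B = (\<Sum>k\<in>{1..n}. \<bar>P k\<bar>)"
  have SB: "\<bar>S j\<bar> \<le> B" if "j \<le> n" for j
  proof -
    have "\<bar>S j\<bar> \<le> (\<Sum>k\<in>{1..j}. \<bar>P k\<bar>)" unfolding S_def by (rule sum_abs)
    also have "\<dots> \<le> B" unfolding B_def using that by (intro sum_mono2) auto
    finally show ?thesis .
  qed
  have Fb: "F B \<ge> 0" unfolding F_def
  proof (intro sum_nonneg mult_nonneg_nonneg)
    fix j assume "j \<in> {..<n+1}"
    then show "0 \<le> Q (j+1) - Q j" "0 \<le> root (r - 1) (B - S j)"
      using Qm[of j] SB[of j] by (auto intro!: real_root_ge_zero)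
  qed
  have Fa: "F (-B) \<le> 0" unfolding F_def
  proof (intro sum_nonpos mult_nonneg_nonpos)
    fix j assume "j \<in> {..<n+1}"
    then show "0 \<le> Q (j+1) - Q j" "root (r - 1) (-B - S j) \<le> 0"
      using Qm[of j] SB[of j] r by auto
  qed
  have B0: "-B \<le> B" using SB[of 0] by simp
  have "continuous_on {-B..B} F" unfolding F_def by (intro continuous_intros)
  then obtain c where Fc: "F c = 0" using IVT'[of F "-B" 0 B] Fa Fb B0 by auto
  define u where "u i = (\<Sum>j<i. (Q (j+1) - Q j) * root (r - 1) (c - S j))" for i
  have Du: "(u i - u (i - 1)) / (Q i - Q (i - 1)) = root (r - 1) (c - S (i - 1))"
    if i1: "1 \<le> i" and i2: "i \<le> n + 1" for i
  proof -
    obtain j where j: "i = Suc j" using i1 by (cases i) auto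
    have "Q (j+1) - Q j \<noteq> 0" using Qm[of j] i2 j by auto
    then show ?thesis using j by (simp add: u_def)
  qed
  have sol: "disc_sol r n Q P u"
    unfolding disc_sol_def
  proof (intro conjI ballI)
    show "u 0 = 0" by (simp add: u_def)
    show "u (n + 1) = 0" using Fc by (simp add: u_def F_def)
    fix i assume i: "i \<in> {1..n}"
    have "S i = S (i - 1) + P i" using i unfolding S_def
      by (cases i) (auto simp: sum.atLeast_Suc_atMost_Suc_shift)
    then show "P i = - rphi r ((u (i + 1) - u i) / (Q (i + 1) - Q i))
                        + rphi r ((u i - u (i - 1)) / (Q i - Q (i - 1)))"
      using Du[of i] Du[of "i+1"] i r by (simp add: rphi_root')
  qed
  have uniq: "v i = w i" if v: "disc_sol r n Q P v" and w: "disc_sol r n Q P w" and i: "i \<le> n+1"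
    for v w i
  proof -
    define D where "D x k = (x k - x (k - 1)) / (Q k - Q (k - 1))" for x k
    define K where "K = rphi r (D v 1) - rphi r (D w 1)"
    have hpos: "Q k - Q (k - 1) > 0" if "1 \<le> k" "k \<le> n + 1" for k
      using Qm[of "k-1"] that by simp
    have eqs: "P k = - rphi r (D x (k+1)) + rphi r (D x k)"
      if "disc_sol r n Q P x" "k \<in> {1..n}" for x k
      using that unfolding disc_sol_def D_def by auto
    have const: "rphi r (D v k) - rphi r (D w k) = K" if "1 \<le> k" "k \<le> n + 1" for k
      using that
    proof (induction k)
      case 0 then show ?case by simp
    next
      case (Suc k)
      show ?case
      proof (cases "k = 0")
        case True then show ?thesis by (simp add: K_def)
      next
        case False
        then have "k \<in> {1..n}" using Suc by auto
        then show ?thesis using eqs[OF v, of k] eqs[OF w, of k] Suc by simp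
      qed
    qed
    have tel: "(\<Sum>j<n+1. x (Suc j) - x j) = 0" if "disc_sol r n Q P x" for x
      using that unfolding disc_sol_def by (simp add: sum_lessThan_telescope)
    have step: "x (Suc j) - x j = (Q (Suc j) - Q j) * D x (Suc j)" if "j < n+1" for x j
      using hpos[of "Suc j"] that unfolding D_def by simp
    have K0: "K = 0"
    proof (rule ccontr)
      assume "K \<noteq> 0"
      then consider "K > 0" | "K < 0" by linarith
      then show False
      proof cases
        case 1
        have "(\<Sum>j<n+1. w (Suc j) - w j) < (\<Sum>j<n+1. v (Suc j) - v j)"
        proof (rule sum_strict_mono)
          fix j assume j: "j \<in> {..<n+1}"
          have "D w (Suc j) < D v (Suc j)"
            using const[of "Suc j"] j 1 by (rule_tac rphi_less[OF r]) auto
          then have "(Q (Suc j) - Q j) * D w (Suc j) < (Q (Suc j) - Q j) * D v (Suc j)"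
            using hpos[of "Suc j"] j by (intro mult_strict_left_mono) auto
          then show "w (Suc j) - w j < v (Suc j) - v j"
            using step[of j w] step[of j v] j by simp
        qed auto
        then show False using tel[OF v] tel[OF w] by simp
      next
        case 2
        have "(\<Sum>j<n+1. v (Suc j) - v j) < (\<Sum>j<n+1. w (Suc j) - w j)"
        proof (rule sum_strict_mono)
          fix j assume j: "j \<in> {..<n+1}"
          have "D v (Suc j) < D w (Suc j)"
            using const[of "Suc j"] j 2 by (rule_tac rphi_less[OF r]) auto
          then have "(Q (Suc j) - Q j) * D v (Suc j) < (Q (Suc j) - Q j) * D w (Suc j)"
            using hpos[of "Suc j"] j by (intro mult_strict_left_mono) auto
          then show "v (Suc j) - v j < w (Suc j) - w j"
            using step[of j v] step[of j w] j by simp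
        qed auto
        then show False using tel[OF v] tel[OF w] by simp
      qed
    qed
    have Deq: "D v k = D w k" if "1 \<le> k" "k \<le> n + 1" for k
    proof -
      have "rphi r (D v k) = rphi r (D w k)" using const[OF that] K0 by simp
      then show ?thesis by (rule rphi_inj[OF r])
    qed
    show ?thesis using i
    proof (induction i)
      case 0 then show ?case using v w by (simp add: disc_sol_def)
    next
      case (Suc j)
      then have "v (Suc j) - v j = w (Suc j) - w j"
        using step[of j v] step[of j w] Deq[of "Suc j"] by simp
      then show ?case using Suc by simp
    qed
  qed
  show ?thesis using sol uniq by blast
qed

end
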